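(* Consider the queueing system in the context under MaxWeight with a diagonal matrix $\Delta$ with positive diagonal entries, in overload ($\rho\notin\mathcal{P}$). Let $H=\limsup_{t\to\infty}\langle \frac{X(t)}{t},\Delta\frac{X(t)}{t}\rangle$ and let $\eta$ be the limit of $X(t_c)/t_c$ along an increasing unbounded sequence $\{t_c\}$ with $\langle\eta,\Delta\eta\rangle=H$. Then for any increasing unbounded sequence $\{t_m\}$ with $\lim_{m\to\infty}X(t_m)/t_m=\mu$, $$\langle\mu,\Delta\eta\rangle\ge\langle\rho,\Delta\eta\rangle-\max_{S\in\mathcal{S}}\langle S,\Delta\eta\rangle.$$
   Context: Model: $Q$ queues, finite set $\mathcal{S}=\{S_1,\dots,S_N\}\subset\mathbb{R}^Q_{\ge0}$, discrete time. Arrivals $A(t)$ with $0\le A_q(t)\le\bar A_q<\infty$ and $\rho_q=\lim_{t\to\infty}\frac1t\sum_{s=0}^{t-1}A_q(s)\in(0,\infty)$. Departures $D_q(t)=\min\{S_q(t),X_q(t)\}$, $X(t+1)=X(t)+A(t)-D(t)$, $X(0)=0$, with $S(t)\in\arg\max_{S\in\mathcal{S}}\langle S,\Delta X(t)\rangle$. Stability region $\mathcal{P}=\{r\in\mathbb{R}^Q_{\ge0}: r\le\sum_n\alpha_nS_n\text{ for some }\alpha_n\ge0,\sum_n\alpha_n=1\}$. *)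

theory Defs
  imports "HOL-Analysis.Analysis" "HOL-Library.Liminf_Limsup"
begin

definition stab_region :: "(real^'q) set \<Rightarrow> (real^'q) set" where
  "stab_region Sch = {r. (\<forall>q. 0 \<le> r $ q) \<and>
     (\<exists>\<alpha>. (\<forall>s\<in>Sch. 0 \<le> \<alpha> s) \<and> sum \<alpha> Sch = 1 \<and>
          (\<forall>q. r $ q \<le> (\<Sum>s\<in>Sch. \<alpha> s *\<^sub>R s) $ q))}"

end

theory Submission
  imports Defs
begin

theorem lemma4:
  fixes Sch :: "(real^'q) set"
    and \<Delta> :: "real^'q^'q"
    and A X Sel :: "nat \<Rightarrow> real^'q"
    and Abar \<rho> \<eta> \<mu> :: "real^'q"
    and tc tm :: "nat \<Rightarrow> nat"
  assumes Sch_fin: "finite Sch"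
    and Sch_nonneg: "\<forall>s\<in>Sch. \<forall>q. 0 \<le> s $ q"
    and Delta_diag: "\<forall>i j. i \<noteq> j \<longrightarrow> \<Delta> $ i $ j = 0"
    and Delta_pos: "\<forall>i. 0 < \<Delta> $ i $ i"
    and A_bdd: "\<forall>t q. 0 \<le> A t $ q \<and> A t $ q \<le> Abar $ q"
    and rho_lim: "\<forall>q. (\<lambda>t. (\<Sum>s<t. A s $ q) / real t) \<longlonglongrightarrow> \<rho> $ q"
    and rho_pos: "\<forall>q. 0 < \<rho> $ q"
    and X0: "X 0 = 0"
    and X_step: "\<forall>t. X (Suc t) = X t + A t - (\<chi> q. min (Sel t $ q) (X t $ q))"
    and maxweight: "\<forall>t. Sel t \<in> Sch \<and> (\<forall>s\<in>Sch. s \<bullet> (\<Delta> *v X t) \<le> Sel t \<bullet> (\<Delta> *v X t))"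
    and overload: "\<rho> \<notin> stab_region Sch"
    and tc_mono: "strict_mono tc"
    and tc_lim: "(\<lambda>c. inverse (real (tc c)) *\<^sub>R X (tc c)) \<longlonglongrightarrow> \<eta>"
    and eta_H: "ereal (\<eta> \<bullet> (\<Delta> *v \<eta>)) =
       limsup (\<lambda>t. ereal ((inverse (real t) *\<^sub>R X t) \<bullet> (\<Delta> *v (inverse (real t) *\<^sub>R X t))))"
    and tm_mono: "strict_mono tm"
    and tm_lim: "(\<lambda>m. inverse (real (tm m)) *\<^sub>R X (tm m)) \<longlonglongrightarrow> \<mu>"
  shows "\<mu> \<bullet> (\<Delta> *v \<eta>) \<ge> \<rho> \<bullet> (\<Delta> *v \<eta>) - Max ((\<lambda>s. s \<bullet> (\<Delta> *v \<eta>)) ` Sch)"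
proof -
  define v where "v = \<Delta> *v \<eta>"
  define M where "M = Max ((\<lambda>s. s \<bullet> v) ` Sch)"
  have Xnn: "\<forall>q. 0 \<le> X t $ q" for t
  proof (induction t)
    case 0 then show ?case using X0 by simp
  next
    case (Suc t)
    show ?case
    proof
      fix q
      have "X (Suc t) $ q = X t $ q + A t $ q - min (Sel t $ q) (X t $ q)"
        using X_step by simp
      then show "0 \<le> X (Suc t) $ q" using A_bdd Suc by (smt (verit))
    qed
  qed
  have eta_nn: "0 \<le> \<eta> $ q" for q
  proof -
    have "(\<lambda>c. (inverse (real (tc c)) *\<^sub>R X (tc c)) $ q) \<longlonglongrightarrow> \<eta> $ q"
      using tc_lim by (rule tendsto_vec_nth)
    moreover have "\<forall>c. 0 \<le> (inverse (real (tc c)) *\<^sub>R X (tc c)) $ q"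
      using Xnn by simp
    ultimately show ?thesis by (meson LIMSEQ_le_const)
  qed
  have vq: "v $ q = \<Delta> $ q $ q * \<eta> $ q" for q
  proof -
    have "v $ q = (\<Sum>j\<in>UNIV. \<Delta> $ q $ j * \<eta> $ j)"
      unfolding v_def by (simp add: matrix_vector_mult_def)
    also have "\<dots> = (\<Sum>j\<in>UNIV. if j = q then \<Delta> $ q $ q * \<eta> $ q else 0)"
      by (rule sum.cong) (use Delta_diag in auto)
    also have "\<dots> = \<Delta> $ q $ q * \<eta> $ q" by simp
    finally show ?thesis .
  qed
  have v_nn: "0 \<le> v $ q" for q
    using vq Delta_pos eta_nn by (simp add: less_imp_le)
  have SelM: "Sel t \<bullet> v \<le> M" for t
    unfolding M_def using maxweight Sch_fin by (intro Max_ge) auto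
  define f where "f t = (\<Sum>s<t. A s \<bullet> v)" for t
  have key: "X t \<bullet> v \<ge> f t - real t * M" for t
  proof (induction t)
    case 0 then show ?case using X0 by (simp add: f_def)
  next
    case (Suc t)
    have "(\<chi> q. min (Sel t $ q) (X t $ q)) \<bullet> v \<le> Sel t \<bullet> v"
      unfolding inner_vec_def
      by (intro sum_mono) (simp add: mult_right_mono v_nn)
    moreover have "X (Suc t) \<bullet> v = X t \<bullet> v + A t \<bullet> v - (\<chi> q. min (Sel t $ q) (X t $ q)) \<bullet> v"
      using X_step by (simp add: inner_diff_left inner_add_left)
    moreover have "f (Suc t) = f t + A t \<bullet> v" by (simp add: f_def)
    ultimately show ?case using Suc SelM[of t] by (simp add: algebra_simps)
  qed
  have f_eq: "f t / real t = (\<Sum>q\<in>UNIV. v $ q * ((\<Sum>s<t. A s $ q) / real t))" for t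
  proof -
    have "f t = (\<Sum>s<t. \<Sum>q\<in>UNIV. A s $ q * v $ q)" by (simp add: f_def inner_vec_def)
    also have "\<dots> = (\<Sum>q\<in>UNIV. \<Sum>s<t. A s $ q * v $ q)" by (rule sum.swap)
    also have "\<dots> = (\<Sum>q\<in>UNIV. v $ q * (\<Sum>s<t. A s $ q))"
      by (simp add: sum_distrib_left mult.commute)
    finally have "f t / real t = (\<Sum>q\<in>UNIV. v $ q * (\<Sum>s<t. A s $ q)) / real t" by (rule arg_cong[where f="\<lambda>x. x / real t"])
    also have "\<dots> = (\<Sum>q\<in>UNIV. v $ q * (\<Sum>s<t. A s $ q) / real t)" by (rule sum_divide_distrib)
    finally show ?thesis by (simp only: times_divide_eq_right)
  qed
  have flim: "(\<lambda>t. f t / real t) \<longlonglongrightarrow> (\<Sum>q\<in>UNIV. v $ q * \<rho> $ q)"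
    unfolding f_eq using rho_lim by (intro tendsto_intros) auto
  have rv: "(\<Sum>q\<in>UNIV. v $ q * \<rho> $ q) = \<rho> \<bullet> v"
    by (simp add: inner_vec_def mult.commute)
  have flim2: "(\<lambda>m. f (tm m) / real (tm m) - M) \<longlonglongrightarrow> \<rho> \<bullet> v - M"
    using LIMSEQ_subseq_LIMSEQ[OF flim tm_mono] rv by (auto intro!: tendsto_intros simp: o_def)
  have Xlim: "(\<lambda>m. (inverse (real (tm m)) *\<^sub>R X (tm m)) \<bullet> v) \<longlonglongrightarrow> \<mu> \<bullet> v"
    using tm_lim by (intro tendsto_intros)
  have ev: "eventually (\<lambda>m. f (tm m) / real (tm m) - M \<le> (inverse (real (tm m)) *\<^sub>R X (tm m)) \<bullet> v) sequentially"
  proof (rule eventually_sequentiallyI[of 1])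
    fix m :: nat assume "1 \<le> m"
    then have pos: "0 < real (tm m)" using seq_suble[OF tm_mono, of m] by simp
    have "f (tm m) - real (tm m) * M \<le> X (tm m) \<bullet> v" by (rule key)
    then have "(f (tm m) - real (tm m) * M) / real (tm m) \<le> (X (tm m) \<bullet> v) / real (tm m)"
      using pos by (simp add: divide_right_mono)
    then show "f (tm m) / real (tm m) - M \<le> (inverse (real (tm m)) *\<^sub>R X (tm m)) \<bullet> v"
    proof -
      have e1: "(f (tm m) - real (tm m) * M) / real (tm m) = f (tm m) / real (tm m) - M"
        using pos by (simp add: diff_divide_distrib)
      have e2: "(inverse (real (tm m)) *\<^sub>R X (tm m)) \<bullet> v = (X (tm m) \<bullet> v) / real (tm m)"
        by (simp add: inner_scaleR_left divide_inverse mult.commute)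
      show ?thesis using e1 e2 \<open>(f (tm m) - real (tm m) * M) / real (tm m) \<le> (X (tm m) \<bullet> v) / real (tm m)\<close> by simp
    qed
  qed
  have "\<rho> \<bullet> v - M \<le> \<mu> \<bullet> v"
    by (rule tendsto_le[OF _ Xlim flim2 ev]) simp
  then show ?thesis unfolding v_def M_def by simp
qed

end
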